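(* Let $\mathcal{A}$ be a finite set of positive integers, let $k$ be an odd positive integer, and let $w \leqslant z$ be real numbers. Then $$ S(\mathcal{A}, z) \leqslant \sum_{r=0}^{k-1} (-1)^r \frac{k-r}{k} \sum_{w \leqslant p_r < p_{r-1} < \cdots < p_1 < z} S\left(\mathcal{A}_{p_1 p_2 \cdots p_r}, w\right), $$ that is, $$ S(\mathcal{A}, z) \leqslant S(\mathcal{A}, w) - \frac{k-1}{k}\sum_{w \leqslant p_1 < z} S(\mathcal{A}_{p_1}, w) + \frac{k-2}{k}\sum_{w \leqslant p_2 < p_1 < z} S(\mathcal{A}_{p_1p_2}, w) - \frac{k-3}{k}\sum_{w \leqslant p_3<p_2 < p_1 < z} S(\mathcal{A}_{p_1p_2p_3}, w) + \cdots - \frac{2}{k}\sum_{w \leqslant p_{k-2}<\cdots < p_1 < z} S(\mathcal{A}_{p_1\cdots p_{k-2}}, w) + \frac{1}{k}\sum_{w \leqslant p_{k-1}<\cdots < p_1 < z} S(\mathcal{A}_{p_1\cdots p_{k-1}}, w), $$ where the $r=0$ term is $S(\mathcal{A}, w)$.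
   Context: Throughout, $p, p_1, p_2, \dots$ denote prime numbers. For a finite set $\mathcal{A}$ of positive integers and a positive integer $d$, $\mathcal{A}_d = \{a : ad \in \mathcal{A}\}$. For real $z$, $S(\mathcal{A}, z)$ denotes the number of $a \in \mathcal{A}$ with $\gcd\left(a, \prod_{p<z} p\right) = 1$, i.e. the number of elements of $\mathcal{A}$ having no prime factor less than $z$. *)

theory Defs
  imports "HOL-Analysis.Analysis"
begin

definition sift :: "nat set \<Rightarrow> real \<Rightarrow> nat" where
  "sift A z = card {a \<in> A. \<forall>p. prime p \<and> real p < z \<longrightarrow> \<not> p dvd a}"

definition subseq_d :: "nat set \<Rightarrow> nat \<Rightarrow> nat set" where
  "subseq_d A d = {a. a * d \<in> A}"

text \<open>Sets {p_1,...,p_r} of r distinct primes with w \<le> p_i < z; a strictly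
  decreasing chain p_r < ... < p_1 corresponds bijectively to such a set.\<close>
definition prime_sets :: "real \<Rightarrow> real \<Rightarrow> nat \<Rightarrow> nat set set" where
  "prime_sets w z r = {P. finite P \<and> card P = r \<and> (\<forall>p\<in>P. prime p \<and> w \<le> real p \<and> real p < z)}"

end

theory Submission imports Defs begin

definition hh :: "nat \<Rightarrow> nat \<Rightarrow> int" where
  "hh m n = (\<Sum>r\<le>n. (-1)^r * int (m choose r))"

lemma hh_Suc: "hh (Suc m) n = (-1)^n * int (m choose n)"
proof (induction n)
  case 0 then show ?case by (simp add: hh_def)
next
  case (Suc n)
  have "hh (Suc m) (Suc n) = hh (Suc m) n + (-1)^(Suc n) * int (Suc m choose Suc n)"
    by (simp add: hh_def)
  also have "\<dots> = (-1)^(Suc n) * int (m choose Suc n)"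
    using Suc by (simp add: algebra_simps)
  finally show ?case .
qed

lemma hh_0: "hh 0 n = 1"
  unfolding hh_def by (induction n) auto

definition TT :: "nat \<Rightarrow> nat \<Rightarrow> int" where
  "TT m k = (\<Sum>r<k. (-1)^r * int (k - r) * int (m choose r))"

lemma TT_sum: "TT m k = (\<Sum>j<k. hh m j)"
proof (induction k)
  case 0 then show ?case by (simp add: TT_def)
next
  case (Suc k)
  have "TT m (Suc k) = (\<Sum>r<Suc k. (-1)^r * int (k - r) * int (m choose r) + (-1)^r * int (m choose r))"
    unfolding TT_def
    by (rule sum.cong) (auto simp: algebra_simps of_nat_diff)
  also have "\<dots> = (\<Sum>r<Suc k. (-1)^r * int (k - r) * int (m choose r)) + hh m k"
    by (simp add: sum.distrib hh_def lessThan_Suc_atMost)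
  also have "(\<Sum>r<Suc k. (-1)^r * int (k - r) * int (m choose r)) = TT m k"
    by (simp add: TT_def)
  finally show ?case using Suc by simp
qed

lemma TT_0: "TT 0 k = int k"
  by (simp add: TT_sum hh_0)

lemma TT_nonneg: assumes "odd k" shows "TT m k \<ge> 0"
proof (cases m)
  case 0 then show ?thesis by (simp add: TT_0)
next
  case (Suc m')
  obtain k' where k: "k = Suc k'" using assms by (cases k) auto
  have "TT m k = (\<Sum>j\<le>k'. (-1)^j * int (m' choose j))"
    unfolding TT_sum Suc k hh_Suc lessThan_Suc_atMost by simp
  also have "\<dots> = hh m' k'" by (simp add: hh_def)
  also have "\<dots> \<ge> 0"
  proof (cases m')
    case 0 then show ?thesis by (simp add: hh_0)
  next
    case (Suc m'')
    have "even k'" using assms k by simp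
    then show ?thesis by (simp add: Suc hh_Suc)
  qed
  finally show ?thesis .
qed

lemma prod_primes_dvd:
  fixes P :: "nat set"
  assumes "finite P" "\<forall>p\<in>P. prime p"
  shows "(\<Prod>P) dvd a \<longleftrightarrow> (\<forall>p\<in>P. p dvd a)"
  using assms
proof (induction P rule: finite_induct)
  case empty then show ?case by simp
next
  case (insert p P)
  have cop: "coprime p (\<Prod>P)"
  proof (rule prod_coprime_right)
    fix i assume "i \<in> P"
    then show "coprime p i" using insert by (metis insertCI primes_coprime)
  qed
  have "(\<Prod>(insert p P)) = p * \<Prod>P" using insert by simp
  then show ?case using insert cop
    by (auto intro: divides_mult dest: dvd_mult_left dvd_mult_right)
qed

lemma prime_dvd_prod_primes:
  fixes P :: "nat set"
  assumes "finite P" "\<forall>p\<in>P. prime p" "prime q" "q dvd \<Prod>P"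
  shows "q \<in> P"
proof -
  obtain p where "p \<in> P" "q dvd p"
    using assms prime_dvd_prod_iff[of P q "\<lambda>x. x"] by auto
  then show ?thesis using assms by (metis primes_dvd_imp_eq)
qed

lemma term_eq: "real_of_int ((-1)^r * int (k - r) * int (m choose r)) / real k
          = (-1)^r * (real (k - r) / real k) * real (m choose r)"
  by simp

theorem theorem1:
  fixes A :: "nat set" and k :: nat and w z :: real
  assumes "finite A" and "\<forall>a\<in>A. a > 0"
    and "odd k" and "k > 0"
    and "w \<le> z"
  shows "real (sift A z) \<le>
    (\<Sum>r<k. (-1) ^ r * (real (k - r) / real k) *
       (\<Sum>P\<in>prime_sets w z r. real (sift (subseq_d A (\<Prod>P)) w)))"
proof -
  define Pr where "Pr = {p::nat. prime p \<and> w \<le> real p \<and> real p < z}"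
  define nopw where "nopw = (\<lambda>a::nat. \<forall>p. prime p \<and> real p < w \<longrightarrow> \<not> p dvd a)"
  define A' where "A' = {a\<in>A. nopw a}"
  define Q where "Q = (\<lambda>a::nat. {p\<in>Pr. p dvd a})"
  define c where "c = (\<lambda>r::nat. (-1) ^ r * (real (k - r) / real k))"
  have finPr: "finite Pr"
  proof (rule finite_subset)
    show "Pr \<subseteq> {..nat \<lceil>z\<rceil>}" unfolding Pr_def by (auto, linarith)
  qed simp
  have finA': "finite A'" using assms(1) unfolding A'_def by simp
  have finQ: "finite (Q a)" for a using finPr unfolding Q_def by simp
  have PS: "prime_sets w z r = {P. P \<subseteq> Pr \<and> card P = r}" for r
    unfolding prime_sets_def Pr_def using finPr[unfolded Pr_def]
    by (auto intro: finite_subset)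
  have finPS: "finite (prime_sets w z r)" for r
    unfolding PS using finPr by (auto intro: finite_subset[of _ "Pow Pr"])
  have key1: "sift (subseq_d A (\<Prod>P)) w = card {a\<in>A'. P \<subseteq> Q a}"
    if P: "P \<in> prime_sets w z r" for P r
  proof -
    have Psub: "P \<subseteq> Pr" and finP: "finite P" using P finPr unfolding PS
      by (auto intro: finite_subset)
    have Pprime: "\<forall>p\<in>P. prime p" using Psub unfolding Pr_def by auto
    define d where "d = \<Prod>P"
    have dpos: "d > 0" unfolding d_def using Pprime prime_gt_0_nat
      by (simp add: prod_pos)
    have inj: "inj_on (\<lambda>b. b * d) X" for X using dpos by (auto simp: inj_on_def)
    have img: "(\<lambda>b. b * d) ` {a \<in> subseq_d A d. nopw a} = {a\<in>A'. P \<subseteq> Q a}"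
    proof
      show "(\<lambda>b. b * d) ` {a \<in> subseq_d A d. nopw a} \<subseteq> {a\<in>A'. P \<subseteq> Q a}"
      proof safe
        fix b assume b: "b \<in> subseq_d A d" "nopw b"
        have "nopw (b * d)" unfolding nopw_def
        proof safe
          fix p assume p: "prime p" "real p < w" "p dvd b * d"
          then have "p dvd b \<or> p dvd d" using prime_dvd_mult_nat by blast
          then show False
          proof
            assume "p dvd b" then show False using b p unfolding nopw_def by blast
          next
            assume "p dvd d"
            then have "p \<in> P" using prime_dvd_prod_primes[OF finP Pprime p(1)] d_def by simp
            then show False using Psub p unfolding Pr_def by auto
          qed
        qed
        then show "b * d \<in> A'" using b unfolding A'_def subseq_d_def by simp
        fix p assume "p \<in> P"
        moreover have "p dvd d" unfolding d_def using \<open>p \<in> P\<close> finP by (metis dvd_prodI)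
        ultimately show "p \<in> Q (b * d)" using Psub unfolding Q_def by auto
      qed
    next
      show "{a\<in>A'. P \<subseteq> Q a} \<subseteq> (\<lambda>b. b * d) ` {a \<in> subseq_d A d. nopw a}"
      proof safe
        fix a assume a: "a \<in> A'" "P \<subseteq> Q a"
        have "d dvd a" unfolding d_def using prod_primes_dvd[OF finP Pprime] a
          unfolding Q_def by auto
        then obtain b where ab: "a = b * d" by (metis dvd_def mult.commute)
        have "nopw b" using a(1) unfolding A'_def nopw_def ab by auto
        moreover have "b \<in> subseq_d A d" using a(1) ab unfolding A'_def subseq_d_def by simp
        ultimately show "a \<in> (\<lambda>b. b * d) ` {a \<in> subseq_d A d. nopw a}" using ab by blast
      qed
    qed
    have "sift (subseq_d A d) w = card {a \<in> subseq_d A d. nopw a}"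
      unfolding sift_def nopw_def by simp
    also have "\<dots> = card ((\<lambda>b. b * d) ` {a \<in> subseq_d A d. nopw a})"
      by (rule card_image[symmetric, OF inj])
    finally show ?thesis using img d_def by simp
  qed
  have key2: "(\<Sum>P\<in>prime_sets w z r. real (sift (subseq_d A (\<Prod>P)) w))
      = (\<Sum>a\<in>A'. real (card (Q a) choose r))" for r
  proof -
    have "(\<Sum>P\<in>prime_sets w z r. real (sift (subseq_d A (\<Prod>P)) w))
        = (\<Sum>P\<in>prime_sets w z r. \<Sum>a\<in>A'. if P \<subseteq> Q a then 1 else 0)"
      using key1 finA' by (simp add: sum.If_cases Collect_conj_eq Int_commute)
    also have "\<dots> = (\<Sum>a\<in>A'. \<Sum>P\<in>prime_sets w z r. if P \<subseteq> Q a then 1 else 0)"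
      by (rule sum.swap)
    also have "\<dots> = (\<Sum>a\<in>A'. real (card (Q a) choose r))"
    proof (rule sum.cong)
      fix a assume "a \<in> A'"
      have "{P \<in> prime_sets w z r. P \<subseteq> Q a} = {P. P \<subseteq> Q a \<and> card P = r}"
        unfolding PS Q_def by auto
      then show "(\<Sum>P\<in>prime_sets w z r. if P \<subseteq> Q a then 1 else 0) = real (card (Q a) choose r)"
        using finPS[of r] finQ[of a] by (simp add: sum.If_cases n_subsets Collect_conj_eq[symmetric] Int_def)
    qed simp
    finally show ?thesis .
  qed
  have "(\<Sum>r<k. c r * (\<Sum>P\<in>prime_sets w z r. real (sift (subseq_d A (\<Prod>P)) w)))
      = (\<Sum>r<k. c r * (\<Sum>a\<in>A'. real (card (Q a) choose r)))"
    using key2 by simp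
  also have "\<dots> = (\<Sum>a\<in>A'. \<Sum>r<k. c r * real (card (Q a) choose r))"
    by (simp add: sum_distrib_left sum.swap[of _ A'])
  also have "\<dots> = (\<Sum>a\<in>A'. real_of_int (TT (card (Q a)) k) / real k)"
  proof (rule sum.cong)
    fix a
    have "real_of_int (TT (card (Q a)) k) / real k
       = (\<Sum>r<k. real_of_int ((-1)^r * int (k - r) * int (card (Q a) choose r)) / real k)"
      unfolding TT_def by (simp only: of_int_sum sum_divide_distrib)
    also have "\<dots> = (\<Sum>r<k. c r * real (card (Q a) choose r))"
      unfolding c_def by (rule sum.cong[OF refl term_eq])
    finally show "(\<Sum>r<k. c r * real (card (Q a) choose r)) = real_of_int (TT (card (Q a)) k) / real k"
      by simp
  qed simp
  also have "\<dots> \<ge> (\<Sum>a\<in>A'. if Q a = {} then 1 else 0)"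
  proof (rule sum_mono)
    fix a
    show "(if Q a = {} then 1 else 0) \<le> real_of_int (TT (card (Q a)) k) / real k"
    proof (cases "Q a = {}")
      case True then show ?thesis using assms(4) by (simp add: TT_0)
    next
      case False then show ?thesis using TT_nonneg[OF assms(3)] by simp
    qed
  qed
  also have "(\<Sum>a\<in>A'. if Q a = {} then 1 else 0) = real (card {a\<in>A'. Q a = {}})"
    using finA' by (simp add: sum.If_cases Int_def)
  also have "{a\<in>A'. Q a = {}} = {a \<in> A. \<forall>p. prime p \<and> real p < z \<longrightarrow> \<not> p dvd a}"
  proof safe
    fix a assume "a \<in> A'" then show "a \<in> A" unfolding A'_def by simp
  next
    fix a p assume a: "a \<in> A'" "Q a = {}" "prime p" "real p < z" "p dvd a"
    show False
    proof (cases "real p < w")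
      case True then show False using a unfolding A'_def nopw_def by blast
    next
      case False
      then have "p \<in> Q a" using a unfolding Q_def Pr_def by auto
      then show False using a by blast
    qed
  next
    fix a assume a: "a \<in> A" "\<forall>p. prime p \<and> real p < z \<longrightarrow> \<not> p dvd a"
    then show "a \<in> A'" using assms(5) unfolding A'_def nopw_def by force
    fix p assume "p \<in> Q a" then show "p \<in> {}" using a unfolding Q_def Pr_def by auto
  qed
  finally show ?thesis unfolding sift_def c_def .
qed

end
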